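(* Let $(\mathcal{C},\mathbb{E},\mathfrak{s})$ satisfy (ET1) and (ET2). If $\mathcal{J}$ is a special preenveloping ideal of $\mathcal{C}$, then the pair $({}^{\perp_{\mathbb{E}}}\mathcal{J},\mathcal{J})$ of ideals is an $\mathbb{E}$-cotorsion pair, i.e. $\mathcal{J}=({}^{\perp_{\mathbb{E}}}\mathcal{J})^{\perp_{\mathbb{E}}}$.
   Context: $\mathcal{C}$ additive, $\mathbb{E}:\mathcal{C}^{\mathrm{op}}\times\mathcal{C}\to\mathrm{Ab}$ biadditive (ET1); for $\delta\in\mathbb{E}(C,A)$, $a:A\to A'$, $c:C'\to C$ put $a_\star\delta=\mathbb{E}(C,a)(\delta)$, $c^\star\delta=\mathbb{E}(c,A)(\delta)$. (ET2): $\mathfrak{s}$ is an additive realization (Nakaoka–Palu): each $\delta\in\mathbb{E}(C,A)$ is assigned an equivalence class of sequences $A\to B\to C$ (up to isomorphism of middle terms), $0$ is realized by split sequences, realization respects direct sums, and if $a_\star\delta=c^\star\delta'$ there is a middle map making the realizing sequences commute. Realized pairs are $\mathbb{E}$-triangles $A\to B\to C\overset{\delta}{\dashrightarrow}$; such commuting triples $(a,b,c)$ with $a_\star\delta=c^\star\delta'$ are morphisms of $\mathbb{E}$-triangles. An ideal: class of morphisms with zeros, closed under sums and two-sided composition. $\mathcal{M}^{\perp_{\mathbb{E}}}=\{g:A\to Y\mid m^\star g_\star\delta=0\ \forall m\in\mathcal{M},\,m:X\to C,\ \forall\delta\in\mathbb{E}(C,A)\}$; ${}^{\perp_{\mathbb{E}}}\mathcal{M}=\{g:X\to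 C\mid g^\star m_\star\delta=0\ \forall m\in\mathcal{M},\,m:A\to Y,\ \forall\delta\in\mathbb{E}(C,A)\}$. An $\mathbb{E}$-cotorsion pair is $(\mathcal{I},\mathcal{J})$ with $\mathcal{I}={}^{\perp_{\mathbb{E}}}\mathcal{J}$, $\mathcal{J}=\mathcal{I}^{\perp_{\mathbb{E}}}$. A special $\mathcal{J}$-preenvelope of $A$ is $e:A\to X$ in $\mathcal{J}$ with $\mathbb{E}$-triangles $A\xrightarrow{e}X\to Y\overset{\delta}{\dashrightarrow}$, $A\to B\to C\overset{\delta'}{\dashrightarrow}$ and a morphism of $\mathbb{E}$-triangles $(\mathrm{id}_A,b,j)$ from the first to the second with $j\in{}^{\perp_{\mathbb{E}}}\mathcal{J}$. $\mathcal{J}$ is special preenveloping if every object has a special $\mathcal{J}$-preenvelope. *)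

theory Defs
  imports "HOL-Algebra.Group"
begin

text \<open>A category with an additive structure and extriangulated data:
  objects of type 'o, morphisms of type 'm, elements of E(C,A) of type 'e.
  cmp g f is the composite g o f (first f, then g).
  Eg C A is the abelian group E(C,A) (written multiplicatively as a HOL-Algebra monoid).
  epush C a d = a_* d  for d in E(C,A), a : A -> A'  (result in E(C,A')).
  epull A c d = c^* d  for d in E(C,A), c : C' -> C  (result in E(C',A)).
  real C A d x y  means the sequence A -x-> B -y-> C belongs to s(d), d in E(C,A).\<close>

record ('o, 'm, 'e) ecat =
  Ob :: "'o set"
  Mor :: "'m set"
  src :: "'m \<Rightarrow> 'o"
  tgt :: "'m \<Rightarrow> 'o"
  cmp :: "'m \<Rightarrow> 'm \<Rightarrow> 'm"
  idm :: "'o \<Rightarrow> 'm"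
  madd :: "'m \<Rightarrow> 'm \<Rightarrow> 'm"
  mzero :: "'o \<Rightarrow> 'o \<Rightarrow> 'm"
  Eg :: "'o \<Rightarrow> 'o \<Rightarrow> 'e monoid"
  epush :: "'o \<Rightarrow> 'm \<Rightarrow> 'e \<Rightarrow> 'e"
  epull :: "'o \<Rightarrow> 'm \<Rightarrow> 'e \<Rightarrow> 'e"
  real :: "'o \<Rightarrow> 'o \<Rightarrow> 'e \<Rightarrow> 'm \<Rightarrow> 'm \<Rightarrow> bool"

definition Hom :: "('o, 'm, 'e) ecat \<Rightarrow> 'o \<Rightarrow> 'o \<Rightarrow> 'm set" where
  "Hom X A B = {f \<in> Mor X. src X f = A \<and> tgt X f = B}"

definition category :: "('o, 'm, 'e) ecat \<Rightarrow> bool" where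
  "category X \<longleftrightarrow>
     (\<forall>f\<in>Mor X. src X f \<in> Ob X \<and> tgt X f \<in> Ob X)
   \<and> (\<forall>A\<in>Ob X. idm X A \<in> Hom X A A)
   \<and> (\<forall>f\<in>Mor X. \<forall>g\<in>Mor X. tgt X f = src X g \<longrightarrow> cmp X g f \<in> Hom X (src X f) (tgt X g))
   \<and> (\<forall>f\<in>Mor X. cmp X (idm X (tgt X f)) f = f \<and> cmp X f (idm X (src X f)) = f)
   \<and> (\<forall>f\<in>Mor X. \<forall>g\<in>Mor X. \<forall>h\<in>Mor X. tgt X f = src X g \<longrightarrow> tgt X g = src X h \<longrightarrow>
        cmp X h (cmp X g f) = cmp X (cmp X h g) f)"

definition hom_group :: "('o, 'm, 'e) ecat \<Rightarrow> 'o \<Rightarrow> 'o \<Rightarrow> 'm monoid" where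
  "hom_group X A B = \<lparr>carrier = Hom X A B, mult = madd X, one = mzero X A B\<rparr>"

definition preadditive :: "('o, 'm, 'e) ecat \<Rightarrow> bool" where
  "preadditive X \<longleftrightarrow> category X
   \<and> (\<forall>A\<in>Ob X. \<forall>B\<in>Ob X. comm_group (hom_group X A B))
   \<and> (\<forall>f\<in>Mor X. \<forall>f'\<in>Mor X. \<forall>g\<in>Mor X. src X f = src X f' \<longrightarrow> tgt X f = tgt X f' \<longrightarrow>
        tgt X f = src X g \<longrightarrow> cmp X g (madd X f f') = madd X (cmp X g f) (cmp X g f'))
   \<and> (\<forall>f\<in>Mor X. \<forall>g\<in>Mor X. \<forall>g'\<in>Mor X. src X g = src X g' \<longrightarrow> tgt X g = tgt X g' \<longrightarrow>
        tgt X f = src X g \<longrightarrow> cmp X (madd X g g') f = madd X (cmp X g f) (cmp X g' f))"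

definition is_biproduct ::
  "('o, 'm, 'e) ecat \<Rightarrow> 'o \<Rightarrow> 'o \<Rightarrow> 'o \<Rightarrow> 'm \<Rightarrow> 'm \<Rightarrow> 'm \<Rightarrow> 'm \<Rightarrow> bool" where
  "is_biproduct X A B S iA iB pA pB \<longleftrightarrow>
     iA \<in> Hom X A S \<and> iB \<in> Hom X B S \<and> pA \<in> Hom X S A \<and> pB \<in> Hom X S B
   \<and> cmp X pA iA = idm X A \<and> cmp X pB iB = idm X B
   \<and> cmp X pA iB = mzero X B A \<and> cmp X pB iA = mzero X A B
   \<and> madd X (cmp X iA pA) (cmp X iB pB) = idm X S"

definition additive :: "('o, 'm, 'e) ecat \<Rightarrow> bool" where
  "additive X \<longleftrightarrow> preadditive X
   \<and> (\<exists>Z\<in>Ob X. idm X Z = mzero X Z Z)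
   \<and> (\<forall>A\<in>Ob X. \<forall>B\<in>Ob X. \<exists>S iA iB pA pB. is_biproduct X A B S iA iB pA pB)"

definition iso :: "('o, 'm, 'e) ecat \<Rightarrow> 'm \<Rightarrow> bool" where
  "iso X f \<longleftrightarrow> f \<in> Mor X \<and> (\<exists>g\<in>Hom X (tgt X f) (src X f).
      cmp X g f = idm X (src X f) \<and> cmp X f g = idm X (tgt X f))"

definition ET1 :: "('o, 'm, 'e) ecat \<Rightarrow> bool" where
  "ET1 X \<longleftrightarrow> additive X
   \<and> (\<forall>C\<in>Ob X. \<forall>A\<in>Ob X. comm_group (Eg X C A))
   \<and> (\<forall>C\<in>Ob X. \<forall>a\<in>Mor X. epush X C a \<in> hom (Eg X C (src X a)) (Eg X C (tgt X a)))
   \<and> (\<forall>A\<in>Ob X. \<forall>c\<in>Mor X. epull X A c \<in> hom (Eg X (tgt X c) A) (Eg X (src X c) A))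
   \<and> (\<forall>C\<in>Ob X. \<forall>A\<in>Ob X. \<forall>d\<in>carrier (Eg X C A).
        epush X C (idm X A) d = d \<and> epull X A (idm X C) d = d)
   \<and> (\<forall>C\<in>Ob X. \<forall>a\<in>Mor X. \<forall>a'\<in>Mor X. tgt X a = src X a' \<longrightarrow>
        (\<forall>d\<in>carrier (Eg X C (src X a)).
           epush X C (cmp X a' a) d = epush X C a' (epush X C a d)))
   \<and> (\<forall>A\<in>Ob X. \<forall>c\<in>Mor X. \<forall>c'\<in>Mor X. tgt X c' = src X c \<longrightarrow>
        (\<forall>d\<in>carrier (Eg X (tgt X c) A).
           epull X A (cmp X c c') d = epull X A c' (epull X A c d)))
   \<and> (\<forall>a\<in>Mor X. \<forall>c\<in>Mor X. \<forall>d\<in>carrier (Eg X (tgt X c) (src X a)).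
        epush X (src X c) a (epull X (src X a) c d) = epull X (tgt X a) c (epush X (tgt X c) a d))
   \<and> (\<forall>C\<in>Ob X. \<forall>a\<in>Mor X. \<forall>a'\<in>Mor X. src X a = src X a' \<longrightarrow> tgt X a = tgt X a' \<longrightarrow>
        (\<forall>d\<in>carrier (Eg X C (src X a)).
           epush X C (madd X a a') d = epush X C a d \<otimes>\<^bsub>Eg X C (tgt X a)\<^esub> epush X C a' d))
   \<and> (\<forall>A\<in>Ob X. \<forall>c\<in>Mor X. \<forall>c'\<in>Mor X. src X c = src X c' \<longrightarrow> tgt X c = tgt X c' \<longrightarrow>
        (\<forall>d\<in>carrier (Eg X (tgt X c) A).
           epull X A (madd X c c') d = epull X A c d \<otimes>\<^bsub>Eg X (src X c) A\<^esub> epull X A c' d))"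

definition seq_equiv :: "('o, 'm, 'e) ecat \<Rightarrow> 'm \<Rightarrow> 'm \<Rightarrow> 'm \<Rightarrow> 'm \<Rightarrow> bool" where
  "seq_equiv X x y x' y' \<longleftrightarrow> (\<exists>b\<in>Hom X (tgt X x) (tgt X x'). iso X b \<and> cmp X b x = x' \<and> cmp X y' b = y)"

text \<open>Direct sum of extensions d in E(C,A), d' in E(C',A') w.r.t. chosen biproducts
  (SA,iA,iA',pA,pA') of A,A' and (SC,jC,jC',qC,qC') of C,C':
  d (+) d' = (iA)_*(qC)^* d + (iA')_*(qC')^* d'.\<close>

definition esum :: "('o, 'm, 'e) ecat \<Rightarrow> 'o \<Rightarrow> 'o \<Rightarrow> 'o \<Rightarrow> 'o \<Rightarrow> 'o \<Rightarrow> 'm \<Rightarrow> 'm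
    \<Rightarrow> 'o \<Rightarrow> 'm \<Rightarrow> 'm \<Rightarrow> 'e \<Rightarrow> 'e \<Rightarrow> 'e" where
  "esum X A A' C C' SA iA iA' SC qC qC' d d' =
     epush X SC iA (epull X A qC d) \<otimes>\<^bsub>Eg X SC SA\<^esub> epush X SC iA' (epull X A' qC' d')"

definition msum :: "('o, 'm, 'e) ecat \<Rightarrow> 'm \<Rightarrow> 'm \<Rightarrow> 'm \<Rightarrow> 'm \<Rightarrow> 'm \<Rightarrow> 'm \<Rightarrow> 'm" where
  "msum X pA pA' iB iB' f f' = madd X (cmp X iB (cmp X f pA)) (cmp X iB' (cmp X f' pA'))"

definition ET2 :: "('o, 'm, 'e) ecat \<Rightarrow> bool" where
  "ET2 X \<longleftrightarrow>
     (\<forall>C A d x y. real X C A d x y \<longrightarrow> C \<in> Ob X \<and> A \<in> Ob X \<and> d \<in> carrier (Eg X C A)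
         \<and> x \<in> Mor X \<and> y \<in> Mor X \<and> src X x = A \<and> tgt X x = src X y \<and> tgt X y = C)
   \<and> (\<forall>C\<in>Ob X. \<forall>A\<in>Ob X. \<forall>d\<in>carrier (Eg X C A). \<exists>x y. real X C A d x y)
   \<and> (\<forall>C A d x y x' y'. real X C A d x y \<longrightarrow>
        (real X C A d x' y' \<longleftrightarrow>
          (x' \<in> Mor X \<and> y' \<in> Mor X \<and> src X x' = A \<and> tgt X x' = src X y' \<and> tgt X y' = C
           \<and> seq_equiv X x y x' y')))
   \<and> (\<forall>C A d x y C' A' d' x' y' a c. real X C A d x y \<longrightarrow> real X C' A' d' x' y' \<longrightarrow>
        a \<in> Hom X A A' \<longrightarrow> c \<in> Hom X C C' \<longrightarrow> epush X C a d = epull X A' c d' \<longrightarrow>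
        (\<exists>b\<in>Hom X (tgt X x) (tgt X x'). cmp X b x = cmp X x' a \<and> cmp X c y = cmp X y' b))
   \<and> (\<forall>A C S iA iC pA pC. A \<in> Ob X \<longrightarrow> C \<in> Ob X \<longrightarrow> is_biproduct X A C S iA iC pA pC \<longrightarrow>
        real X C A (\<one>\<^bsub>Eg X C A\<^esub>) iA pC)
   \<and> (\<forall>C A d x y C' A' d' x' y' SA iA iA' pA pA' SB iB iB' pB pB' SC iC iC' pC pC'.
        real X C A d x y \<longrightarrow> real X C' A' d' x' y' \<longrightarrow>
        is_biproduct X A A' SA iA iA' pA pA' \<longrightarrow>
        is_biproduct X (tgt X x) (tgt X x') SB iB iB' pB pB' \<longrightarrow>
        is_biproduct X C C' SC iC iC' pC pC' \<longrightarrow>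
        real X SC SA (esum X A A' C C' SA iA iA' SC pC pC' d d')
          (msum X pA pA' iB iB' x x') (msum X pB pB' iC iC' y y'))"

definition etri :: "('o, 'm, 'e) ecat \<Rightarrow> 'o \<Rightarrow> 'o \<Rightarrow> 'o \<Rightarrow> 'm \<Rightarrow> 'm \<Rightarrow> 'e \<Rightarrow> bool" where
  "etri X A B C x y d \<longleftrightarrow> real X C A d x y \<and> tgt X x = B"

definition etri_morph :: "('o, 'm, 'e) ecat \<Rightarrow> 'o \<Rightarrow> 'o \<Rightarrow> 'o \<Rightarrow> 'm \<Rightarrow> 'm \<Rightarrow> 'e
   \<Rightarrow> 'o \<Rightarrow> 'o \<Rightarrow> 'o \<Rightarrow> 'm \<Rightarrow> 'm \<Rightarrow> 'e \<Rightarrow> 'm \<Rightarrow> 'm \<Rightarrow> 'm \<Rightarrow> bool" where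
  "etri_morph X A B C x y d A' B' C' x' y' d' a b c \<longleftrightarrow>
     etri X A B C x y d \<and> etri X A' B' C' x' y' d'
   \<and> a \<in> Hom X A A' \<and> b \<in> Hom X B B' \<and> c \<in> Hom X C C'
   \<and> cmp X b x = cmp X x' a \<and> cmp X c y = cmp X y' b
   \<and> epush X C a d = epull X A' c d'"

definition is_ideal :: "('o, 'm, 'e) ecat \<Rightarrow> 'm set \<Rightarrow> bool" where
  "is_ideal X J \<longleftrightarrow> J \<subseteq> Mor X
   \<and> (\<forall>A\<in>Ob X. \<forall>B\<in>Ob X. mzero X A B \<in> J)
   \<and> (\<forall>f\<in>J. \<forall>g\<in>J. src X f = src X g \<longrightarrow> tgt X f = tgt X g \<longrightarrow> madd X f g \<in> J)
   \<and> (\<forall>f\<in>J. \<forall>g\<in>Mor X. src X g = tgt X f \<longrightarrow> cmp X g f \<in> J)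
   \<and> (\<forall>f\<in>J. \<forall>h\<in>Mor X. tgt X h = src X f \<longrightarrow> cmp X f h \<in> J)"

definition rperp :: "('o, 'm, 'e) ecat \<Rightarrow> 'm set \<Rightarrow> 'm set" where
  "rperp X M = {g \<in> Mor X. \<forall>m\<in>M. \<forall>d\<in>carrier (Eg X (tgt X m) (src X g)).
      epull X (tgt X g) m (epush X (tgt X m) g d) = \<one>\<^bsub>Eg X (src X m) (tgt X g)\<^esub>}"

definition lperp :: "('o, 'm, 'e) ecat \<Rightarrow> 'm set \<Rightarrow> 'm set" where
  "lperp X M = {g \<in> Mor X. \<forall>m\<in>M. \<forall>d\<in>carrier (Eg X (tgt X g) (src X m)).
      epull X (tgt X m) g (epush X (tgt X g) m d) = \<one>\<^bsub>Eg X (src X g) (tgt X m)\<^esub>}"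

definition cotorsion_pair :: "('o, 'm, 'e) ecat \<Rightarrow> 'm set \<Rightarrow> 'm set \<Rightarrow> bool" where
  "cotorsion_pair X I J \<longleftrightarrow> I = lperp X J \<and> J = rperp X I"

definition special_preenvelope :: "('o, 'm, 'e) ecat \<Rightarrow> 'm set \<Rightarrow> 'o \<Rightarrow> 'm \<Rightarrow> bool" where
  "special_preenvelope X J A e \<longleftrightarrow> e \<in> J \<and> e \<in> Mor X \<and> src X e = A
   \<and> (\<exists>Y y d B C x' y' d' b j.
        etri_morph X A (tgt X e) Y e y d A B C x' y' d' (idm X A) b j
        \<and> j \<in> lperp X J)"

definition special_preenveloping :: "('o, 'm, 'e) ecat \<Rightarrow> 'm set \<Rightarrow> bool" where
  "special_preenveloping X J \<longleftrightarrow> (\<forall>A\<in>Ob X. \<exists>e. special_preenvelope X J A e)"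

end

theory Submission
  imports Defs
begin

theorem theorem3p13:
  fixes X :: "('o, 'm, 'e) ecat" and J :: "'m set"
  assumes "ET1 X" and "ET2 X"
    and "is_ideal X J"
    and "special_preenveloping X J"
  shows "cotorsion_pair X (lperp X J) J"
proof -
  note E1 = assms(1)[unfolded ET1_def]
  note E2 = assms(2)[unfolded ET2_def]
  have E1id: "\<forall>C\<in>Ob X. \<forall>A\<in>Ob X. \<forall>d\<in>carrier (Eg X C A).
        epush X C (idm X A) d = d \<and> epull X A (idm X C) d = d"
    using E1 by (elim conjE)
  have E1nat: "\<forall>a\<in>Mor X. \<forall>c\<in>Mor X. \<forall>d\<in>carrier (Eg X (tgt X c) (src X a)).
        epush X (src X c) a (epull X (src X a) c d) = epull X (tgt X a) c (epush X (tgt X c) a d)"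
    using E1 by (elim conjE)
  have E1grp: "\<forall>C\<in>Ob X. \<forall>A\<in>Ob X. comm_group (Eg X C A)" using E1 by (elim conjE)
  have E1add: "additive X" using E1 by (elim conjE)
  have E2real: "\<forall>C A d x y. real X C A d x y \<longrightarrow> C \<in> Ob X \<and> A \<in> Ob X \<and> d \<in> carrier (Eg X C A)
         \<and> x \<in> Mor X \<and> y \<in> Mor X \<and> src X x = A \<and> tgt X x = src X y \<and> tgt X y = C"
    using E2 by (elim conjE)
  have E2mor: "\<forall>C A d x y C' A' d' x' y' a c. real X C A d x y \<longrightarrow> real X C' A' d' x' y' \<longrightarrow>
        a \<in> Hom X A A' \<longrightarrow> c \<in> Hom X C C' \<longrightarrow> epush X C a d = epull X A' c d' \<longrightarrow>
        (\<exists>b\<in>Hom X (tgt X x) (tgt X x'). cmp X b x = cmp X x' a \<and> cmp X c y = cmp X y' b)"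
    using E2 by (elim conjE)
  have E2split: "\<forall>A C S iA iC pA pC. A \<in> Ob X \<longrightarrow> C \<in> Ob X \<longrightarrow> is_biproduct X A C S iA iC pA pC \<longrightarrow>
        real X C A (\<one>\<^bsub>Eg X C A\<^esub>) iA pC" using E2 by (elim conjE)
  have JM: "J \<subseteq> Mor X" using assms(3) by (simp add: is_ideal_def)
  have cat: "category X" using E1add by (simp add: additive_def preadditive_def)
  have "rperp X (lperp X J) \<subseteq> J"
  proof
    fix g assume g: "g \<in> rperp X (lperp X J)"
    have gM: "g \<in> Mor X" using g by (simp add: rperp_def)
    define A where "A = src X g"
    define T where "T = tgt X g"
    have AO: "A \<in> Ob X" and TO: "T \<in> Ob X" using cat gM unfolding category_def A_def T_def by auto
    obtain e where "special_preenvelope X J A e" using assms(4) AO by (auto simp: special_preenveloping_def)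
    then obtain Y y d B C x' y' d' b j where eJ: "e \<in> J" and eM: "e \<in> Mor X" and se: "src X e = A"
      and em: "etri_morph X A (tgt X e) Y e y d A B C x' y' d' (idm X A) b j"
      and jl: "j \<in> lperp X J"
      unfolding special_preenvelope_def by blast
    have r1: "real X Y A d e y" and r2: "real X C A d' x' y'" and jH: "j \<in> Hom X Y C"
      and eq: "epush X Y (idm X A) d = epull X A j d'"
      using em by (auto simp: etri_morph_def etri_def)
    have et: "\<forall>C A d x y. real X C A d x y \<longrightarrow> C \<in> Ob X \<and> A \<in> Ob X \<and> d \<in> carrier (Eg X C A)"
      using E2real by blast
    have dc: "d \<in> carrier (Eg X Y A)" and YO: "Y \<in> Ob X" and d'c: "d' \<in> carrier (Eg X C A)"
      using et r1 r2 by blast+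
    have "epush X Y (idm X A) d = d" using E1id YO AO dc by blast
    with eq have dd: "d = epull X A j d'" by simp
    have jM: "j \<in> Mor X" and sj: "src X j = Y" and tj: "tgt X j = C" using jH by (auto simp: Hom_def)
    have "epull X T j (epush X C g d') = \<one>\<^bsub>Eg X Y T\<^esub>"
      using g jl d'c tj sj unfolding rperp_def A_def T_def by auto
    moreover have "epush X (src X j) g (epull X (src X g) j d') = epull X (tgt X g) j (epush X (tgt X j) g d')"
      using E1nat gM jM d'c tj unfolding A_def by blast
    ultimately have z: "epush X Y g d = \<one>\<^bsub>Eg X Y T\<^esub>" using dd sj tj unfolding A_def T_def by simp
    obtain S i1 i2 p1 p2 where bp: "is_biproduct X T Y S i1 i2 p1 p2"
      using E1add TO YO unfolding additive_def by blast
    have r3: "real X Y T (\<one>\<^bsub>Eg X Y T\<^esub>) i1 p2" using E2split TO YO bp by blast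
    have oc: "\<one>\<^bsub>Eg X Y T\<^esub> \<in> carrier (Eg X Y T)"
      using E1grp YO TO by (metis comm_group_def group.is_monoid monoid.one_closed)
    have "epull X T (idm X Y) (\<one>\<^bsub>Eg X Y T\<^esub>) = \<one>\<^bsub>Eg X Y T\<^esub>"
      using E1id YO TO oc by blast
    with z have z2: "epush X Y g d = epull X T (idm X Y) (\<one>\<^bsub>Eg X Y T\<^esub>)" by simp
    have gH: "g \<in> Hom X A T" using gM by (simp add: Hom_def A_def T_def)
    have idH: "idm X Y \<in> Hom X Y Y" using cat YO unfolding category_def by blast
    obtain bb where bbH: "bb \<in> Hom X (tgt X e) (tgt X i1)" and bbe: "cmp X bb e = cmp X i1 g"
      using E2mor r1 r3 gH idH z2 by blast
    have i1H: "i1 \<in> Hom X T S" and p1H: "p1 \<in> Hom X S T" and pi: "cmp X p1 i1 = idm X T"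
      using bp by (auto simp: is_biproduct_def)
    define h where "h = cmp X p1 bb"
    have bbM: "bb \<in> Mor X" and p1M: "p1 \<in> Mor X" and i1M: "i1 \<in> Mor X"
      using bbH p1H i1H by (auto simp: Hom_def)
    have hH: "h \<in> Hom X (tgt X e) T" using cat bbH p1H i1H unfolding category_def h_def Hom_def by auto
    have "cmp X h e = cmp X p1 (cmp X bb e)"
      using cat eM bbM p1M bbH p1H i1H unfolding category_def h_def Hom_def by auto
    also have "\<dots> = cmp X p1 (cmp X i1 g)" using bbe by simp
    also have "\<dots> = cmp X (cmp X p1 i1) g"
      using cat gM p1M i1M p1H i1H unfolding category_def Hom_def T_def by auto
    also have "\<dots> = g" using pi cat gM unfolding category_def T_def by auto
    finally have "cmp X h e = g" .
    moreover have "cmp X h e \<in> J" using assms(3) eJ hH unfolding is_ideal_def Hom_def by auto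
    ultimately show "g \<in> J" by simp
  qed
  moreover have "J \<subseteq> rperp X (lperp X J)"
    using JM unfolding rperp_def lperp_def by auto
  ultimately show ?thesis by (auto simp: cotorsion_pair_def)
qed

end
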